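(* Let $N\ge 2$, $K\ge 2$ be integers, and let $R_{\mathrm{F}}(M)$, $r_{\mathrm{C}}(M,N,K)$, $r_{\mathrm{D}}(M,N,K)$ be as in the context. (1) If $N>K$ and $(N,K)\neq(3,2)$, then $\dfrac{R_{\mathrm{F}}(M)}{r_{\mathrm{C}}(M,N,K)}\le 2$ for all $1\le M\le N$. (2) If $N\le K$, then $\dfrac{R_{\mathrm{F}}(M)}{r_{\mathrm{D}}(M,N,K)}\le e$ for all $1\le M\le N$.
   Context: Binomial convention: $\binom{n}{m}=0$ if $m>n$. $R_{\mathrm{F}}(M)$, $M\in[0,N]$, is the lower convex envelope of the points $\{(0,N)\}\cup\{(M_t,R_t):t\in\{0,\ldots,K\}\}$ with $M_t=1+\frac{t(N-1)}{K}$ and $R_t=\frac{\binom{K}{t+1}-\binom{K-\min\{N-1,K\}}{t+1}}{\binom{K}{t}}$. For positive integers $N',K$, $r_{\mathrm{C}}(M,N',K)$, $M\in[0,N']$, is the lower convex envelope of the points $\left(\frac{tN'}{K},\ \frac{\binom{K}{t+1}-\binom{K-\min\{N',K\}}{t+1}}{\binom{K}{t}}\right)$, $t\in\{0,\ldots,K\}$; and $r_{\mathrm{D}}(M,N',K):=\frac{N'-M}{M}\left(1-\left(1-\frac{M}{N'}\right)^{\min\{N',K\}}\right)$ for $M\in(0,N']$. Ratios at points where the denominator vanishes (at $M=N$) are to be read as the corresponding inequality $R_{\mathrm{F}}(M)\le c\cdot(\text{denominator})$. *)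

theory Defs
  imports "HOL-Analysis.Analysis"
begin

definition lower_conv_env :: "(real \<times> real) set \<Rightarrow> real \<Rightarrow> real" where
  "lower_conv_env P x = Inf {y. (x, y) \<in> convex hull P}"

definition coef_R :: "nat \<Rightarrow> nat \<Rightarrow> nat \<Rightarrow> real" where
  "coef_R L K t = (real (K choose (t+1)) - real ((K - min L K) choose (t+1))) / real (K choose t)"

definition R_F :: "nat \<Rightarrow> nat \<Rightarrow> real \<Rightarrow> real" where
  "R_F N K M = lower_conv_env
     ({(0, real N)} \<union> {(1 + real t * (real N - 1) / real K, coef_R (N - 1) K t) | t. t \<in> {0..K}}) M"

definition r_C :: "real \<Rightarrow> nat \<Rightarrow> nat \<Rightarrow> real" where
  "r_C M N' K = lower_conv_env
     {(real t * real N' / real K, coef_R N' K t) | t. t \<in> {0..K}} M"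

definition r_D :: "real \<Rightarrow> nat \<Rightarrow> nat \<Rightarrow> real" where
  "r_D M N' K = (real N' - M) / M * (1 - (1 - M / real N') ^ (min N' K))"

end

theory Submission
  imports Defs
begin

lemma halfplane_convex: "convex {p::real\<times>real. \<alpha> + \<beta> * fst p \<le> snd p}"
proof (rule convexI)
  fix x y :: "real\<times>real" and u v :: real
  assume x: "x \<in> {p. \<alpha> + \<beta> * fst p \<le> snd p}" and y: "y \<in> {p. \<alpha> + \<beta> * fst p \<le> snd p}"
    and u: "0 \<le> u" and v: "0 \<le> v" and uv: "u + v = 1"
  have "u * (\<alpha> + \<beta> * fst x) \<le> u * snd x" using x u by (intro mult_left_mono) auto
  moreover have "v * (\<alpha> + \<beta> * fst y) \<le> v * snd y" using y v by (intro mult_left_mono) auto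
  ultimately have "(u+v)*\<alpha> + \<beta> * (u * fst x + v * fst y) \<le> u * snd x + v * snd y"
    by (simp add: algebra_simps)
  then show "u *\<^sub>R x + v *\<^sub>R y \<in> {p. \<alpha> + \<beta> * fst p \<le> snd p}" using uv by simp
qed

lemma hull_above:
  fixes P :: "(real\<times>real) set"
  assumes "\<forall>p\<in>P. \<alpha> + \<beta> * fst p \<le> snd p" "p \<in> convex hull P"
  shows "\<alpha> + \<beta> * fst p \<le> snd p"
proof -
  have "convex hull P \<subseteq> {p::real\<times>real. \<alpha> + \<beta> * fst p \<le> snd p}"
    by (rule hull_minimal) (use assms(1) halfplane_convex in auto)
  then show ?thesis using assms(2) by auto
qed

lemma env_le:
  fixes P :: "(real\<times>real) set"
  assumes "(M,y) \<in> convex hull P" "\<forall>p\<in>P. 0 \<le> snd p"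
  shows "lower_conv_env P M \<le> y"
  unfolding lower_conv_env_def
proof (rule cInf_lower)
  show "y \<in> {y. (M, y) \<in> convex hull P}" using assms by auto
  show "bdd_below {y. (M, y) \<in> convex hull P}"
    using hull_above[of P 0 0] assms(2) by (auto intro!: bdd_belowI[of _ 0] simp: case_prod_beta)
qed

lemma env_ge:
  fixes P :: "(real\<times>real) set"
  assumes "\<forall>p\<in>P. \<alpha> + \<beta> * fst p \<le> snd p" "(M,y0) \<in> convex hull P"
  shows "\<alpha> + \<beta> * M \<le> lower_conv_env P M"
  unfolding lower_conv_env_def
proof (rule cInf_greatest)
  show "{y. (M, y) \<in> convex hull P} \<noteq> {}" using assms by auto
  fix y assume "y \<in> {y. (M, y) \<in> convex hull P}"
  then show "\<alpha> + \<beta> * M \<le> y" using hull_above[OF assms(1), of "(M,y)"] by auto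
qed

lemma seg_in_hull:
  fixes P :: "(real\<times>real) set"
  assumes "(x1,y1) \<in> P" "(x2,y2) \<in> P" "x1 \<le> M" "M \<le> x2" "x1 < x2"
  shows "(M, y1 + (y2-y1)*(M-x1)/(x2-x1)) \<in> convex hull P"
proof -
  define l where "l = (M-x1)/(x2-x1)"
  have l0: "0 \<le> l" "l \<le> 1" using assms unfolding l_def by (auto simp: field_simps)
  have "(1-l) *\<^sub>R (x1,y1) + l *\<^sub>R (x2,y2) \<in> convex hull P"
    using l0 assms by (intro convexD[OF convex_convex_hull] hull_inc) auto
  moreover have "(1-l) *\<^sub>R (x1,y1) + l *\<^sub>R (x2,y2) = (M, y1 + (y2-y1)*(M-x1)/(x2-x1))"
  proof -
    have d: "x2 - x1 \<noteq> 0" using assms by auto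
    have "(1-l)*x1 + l*x2 = x1 + l*(x2-x1)" by (simp add: algebra_simps)
    also have "\<dots> = M" unfolding l_def using d by simp
    finally have 1: "(1-l)*x1 + l*x2 = M" .
    have "(1-l)*y1 + l*y2 = y1 + (y2-y1)*l" by (simp add: algebra_simps)
    then have 2: "(1-l)*y1 + l*y2 = y1 + (y2-y1)*(M-x1)/(x2-x1)" unfolding l_def by simp
    show ?thesis using 1 2 by simp
  qed
  ultimately show ?thesis by simp
qed

lemma binom_mean:
  fixes q r :: real
  assumes "q + r = 1"
  shows "(\<Sum>t\<le>K. real (K choose t) * q^t * r^(K-t) * real t) = real K * q"
proof (cases K)
  case 0 then show ?thesis by simp
next
  case (Suc K')
  have "(\<Sum>t\<le>K. real (K choose t) * q^t * r^(K-t) * real t)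
      = (\<Sum>j\<le>K'. real (Suc K' choose Suc j) * q^(Suc j) * r^(K'-j) * real (Suc j))"
    unfolding Suc by (subst sum.atMost_Suc_shift) simp
  also have "\<dots> = (\<Sum>j\<le>K'. real (Suc K') * q * (real (K' choose j) * q^j * r^(K'-j)))"
  proof (rule sum.cong)
    fix j
    have "real (Suc K' choose Suc j) * real (Suc j) = real (Suc K') * real (K' choose j)"
      using Suc_times_binomial[of j K'] by (metis of_nat_mult mult.commute)
    then show "real (Suc K' choose Suc j) * q^(Suc j) * r^(K'-j) * real (Suc j)
       = real (Suc K') * q * (real (K' choose j) * q^j * r^(K'-j))"
    proof -
      assume h: "real (Suc K' choose Suc j) * real (Suc j) = real (Suc K') * real (K' choose j)"
      have "real (Suc K' choose Suc j) * q^(Suc j) * r^(K'-j) * real (Suc j)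
          = (q * q^j * r^(K'-j)) * (real (Suc K' choose Suc j) * real (Suc j))"
        by (simp only: mult_ac power_Suc)
      also have "\<dots> = (q * q^j * r^(K'-j)) * (real (Suc K') * real (K' choose j))" using h by simp
      finally show ?thesis by (simp only: mult_ac)
    qed
  qed simp
  also have "\<dots> = real (Suc K') * q * (q+r)^K'"
    by (simp add: binomial_ring sum_distrib_left)
  finally show ?thesis using assms Suc by simp
qed

lemma hockey:
  assumes "L \<le> K"
  shows "real (K choose (t+1)) - real ((K - L) choose (t+1)) = (\<Sum>i\<in>{1..L}. real ((K-i) choose t))"
  using assms
proof (induction L)
  case 0 then show ?case by simp
next
  case (Suc L)
  have "K - L = Suc (K - Suc L)" using Suc.prems by simp
  then have "((K - L) choose (t+1)) = ((K - Suc L) choose (t+1)) + ((K - Suc L) choose t)"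
    by simp
  then show ?case using Suc by simp
qed

lemma binom_shift:
  fixes q r :: real
  assumes "q + r = 1" "i \<le> K"
  shows "(\<Sum>t\<le>K. q^t * r^(K-t) * real ((K-i) choose t)) = r^i"
proof -
  define m where "m = K - i"
  have K: "K = m + i" using assms unfolding m_def by simp
  have mi: "K - i = m" unfolding m_def ..
  have "(\<Sum>t\<le>K. q^t * r^(K-t) * real ((K-i) choose t)) = (\<Sum>t\<le>m. q^t * r^(K-t) * real (m choose t))"
    unfolding mi
  proof (rule sum.mono_neutral_right)
    show "\<forall>t\<in>{..K} - {..m}. q^t * r^(K-t) * real (m choose t) = 0" using K by auto
  qed (use K in auto)
  also have "\<dots> = (\<Sum>t\<le>m. r^i * (real (m choose t) * q^t * r^(m-t)))"
  proof (rule sum.cong)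
    fix t assume "t \<in> {..m}"
    then have "K - t = i + (m - t)" using K by auto
    then show "q^t * r^(K-t) * real (m choose t) = r^i * (real (m choose t) * q^t * r^(m-t))"
      by (simp add: power_add)
  qed simp
  also have "\<dots> = r^i * (q+r)^m" by (simp add: binomial_ring sum_distrib_left)
  finally show ?thesis using assms by simp
qed

lemma geo_id:
  fixes x :: real
  shows "(\<Sum>i\<in>{1..n}. x^i) * (1-x) = x - x^(n+1)"
proof (induction n)
  case 0 then show ?case by simp
next
  case (Suc n)
  have "(\<Sum>i\<in>{1..Suc n}. x^i) = (\<Sum>i\<in>{1..n}. x^i) + x^Suc n" by (simp add: sum.cl_ivl_Suc)
  then have "(\<Sum>i\<in>{1..Suc n}. x^i) * (1-x) = (\<Sum>i\<in>{1..n}. x^i) * (1-x) + x^Suc n - x^Suc (Suc n)"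
    by (simp add: algebra_simps)
  then show ?case using Suc.IH by simp
qed

lemma exp_bound:
  assumes "N \<ge> 2"
  shows "(real N / (real N - 1)) ^ (N-1) \<le> exp 1"
proof -
  have n1: "real N - 1 > 0" using assms by simp
  have "real N / (real N - 1) = 1 + 1/(real N - 1)" using n1 by (simp add: field_simps)
  also have "\<dots> \<le> exp (1/(real N - 1))" by (rule exp_ge_add_one_self)
  finally have "(real N / (real N - 1)) ^ (N-1) \<le> exp (1/(real N - 1)) ^ (N-1)"
    using n1 by (intro power_mono) auto
  also have "\<dots> = exp (real (N-1) * (1/(real N - 1)))" using exp_of_nat_mult[of "N-1" "1/(real N - 1)"] by simp
  also have "real (N-1) = real N - 1" using assms by simp
  finally show ?thesis using n1 by simp
qed

lemma coef_nonneg: "0 \<le> coef_R L K t"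
  unfolding coef_R_def using binomial_right_mono[of "K - min L K" K "t+1"] by (auto intro!: divide_nonneg_nonneg)

lemma part2:
  assumes N2: "N \<ge> 2" and NK: "N \<le> K" and M1: "1 \<le> M" and MN: "M \<le> real N"
  shows "R_F N K M \<le> exp 1 * r_D M N K"
proof -
  define P where "P = {(0::real, real N)} \<union> {(1 + real t * (real N - 1) / real K, coef_R (N - 1) K t) | t. t \<in> {0..K}}"
  have RF: "R_F N K M = lower_conv_env P M" unfolding R_F_def P_def ..
  have n1: "real N - 1 > 0" using N2 by simp
  have Kpos: "real K > 0" using NK N2 by simp
  define q where "q = (M-1)/(real N - 1)"
  define r where "r = 1 - q"
  have q0: "0 \<le> q" "q \<le> 1" using M1 MN n1 unfolding q_def by (auto simp: field_simps)
  have r0: "0 \<le> r" using q0 unfolding r_def by simp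
  have qr: "q + r = 1" unfolding r_def by simp
  define w where "w t = real (K choose t) * q^t * r^(K-t)" for t
  define pt where "pt t = (1 + real t * (real N - 1) / real K, coef_R (N - 1) K t)" for t
  have sw: "(\<Sum>t\<le>K. w t) = 1" unfolding w_def using binomial_ring[of q r K] qr by simp
  have hullpt: "(\<Sum>t\<le>K. w t *\<^sub>R pt t) \<in> convex hull P"
  proof (rule convex_sum)
    show "\<And>i. i \<in> {..K} \<Longrightarrow> 0 \<le> w i" unfolding w_def using q0 r0 by simp
    show "\<And>i. i \<in> {..K} \<Longrightarrow> pt i \<in> convex hull P"
      by (rule hull_inc) (auto simp: P_def pt_def)
  qed (use sw in auto)
  have fstv: "fst (\<Sum>t\<le>K. w t *\<^sub>R pt t) = M"
  proof -
    have "fst (\<Sum>t\<le>K. w t *\<^sub>R pt t) = (\<Sum>t\<le>K. w t + (real N - 1)/real K * (w t * real t))"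
      unfolding fst_sum by (intro sum.cong) (auto simp: pt_def algebra_simps)
    also have "\<dots> = 1 + (real N - 1)/real K * (real K * q)"
    proof -
      have "(\<Sum>t\<le>K. w t + (real N - 1)/real K * (w t * real t)) = (\<Sum>t\<le>K. w t) + (real N - 1)/real K * (\<Sum>t\<le>K. w t * real t)"
        by (simp only: sum.distrib sum_distrib_left)
      moreover have "(\<Sum>t\<le>K. w t * real t) = real K * q" unfolding w_def by (rule binom_mean[OF qr])
      ultimately show ?thesis using sw by simp
    qed
    also have "\<dots> = M" using Kpos n1 unfolding q_def by (simp add: field_simps)
    finally show ?thesis .
  qed
  have sndv: "snd (\<Sum>t\<le>K. w t *\<^sub>R pt t) = (\<Sum>i\<in>{1..N-1}. r^i)"
  proof -
    have mn: "min (N-1) K = N - 1" using NK by simp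
    have "snd (\<Sum>t\<le>K. w t *\<^sub>R pt t) = (\<Sum>t\<le>K. q^t * r^(K-t) * (\<Sum>i\<in>{1..N-1}. real ((K-i) choose t)))"
      unfolding snd_sum
    proof (intro sum.cong refl)
      fix t assume t: "t \<in> {..K}"
      then have c: "real (K choose t) \<noteq> 0" by simp
      have "snd (w t *\<^sub>R pt t) = q^t * r^(K-t) * (real (K choose (t+1)) - real ((K - (N-1)) choose (t+1)))"
        unfolding w_def pt_def coef_R_def mn using c by simp
      also have "\<dots> = q^t * r^(K-t) * (\<Sum>i\<in>{1..N-1}. real ((K-i) choose t))"
        using hockey[of "N-1" K t] NK by simp
      finally show "snd (w t *\<^sub>R pt t) = q^t * r^(K-t) * (\<Sum>i\<in>{1..N-1}. real ((K-i) choose t))" .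
    qed
    also have "\<dots> = (\<Sum>i\<in>{1..N-1}. (\<Sum>t\<le>K. q^t * r^(K-t) * real ((K-i) choose t)))"
      by (simp add: sum_distrib_left sum.swap[of _ "{..K}"])
    also have "\<dots> = (\<Sum>i\<in>{1..N-1}. r^i)"
      by (intro sum.cong refl binom_shift[OF qr]) (use NK in auto)
    finally show ?thesis .
  qed
  have "(\<Sum>t\<le>K. w t *\<^sub>R pt t) = (M, \<Sum>i\<in>{1..N-1}. r^i)"
    using fstv sndv by (simp add: prod_eq_iff)
  with hullpt have "(M, \<Sum>i\<in>{1..N-1}. r^i) \<in> convex hull P" by simp
  moreover have "\<forall>p\<in>P. 0 \<le> snd p" unfolding P_def using coef_nonneg by auto
  ultimately have RFb: "R_F N K M \<le> (\<Sum>i\<in>{1..N-1}. r^i)" unfolding RF by (rule env_le)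
  define x where "x = 1 - M / real N"
  define c where "c = real N / (real N - 1)"
  have x0: "0 \<le> x" using MN N2 unfolding x_def by (simp add: field_simps)
  have rx: "r = x * c" unfolding r_def q_def x_def c_def using n1 N2 by (simp add: field_simps)
  have c1: "1 \<le> c" unfolding c_def using n1 by (simp add: field_simps)
  have ce: "c^(N-1) \<le> exp 1" unfolding c_def by (rule exp_bound[OF N2])
  have "(\<Sum>i\<in>{1..N-1}. r^i) \<le> (\<Sum>i\<in>{1..N-1}. exp 1 * x^i)"
  proof (rule sum_mono)
    fix i assume i: "i \<in> {1..N-1}"
    have "c^i \<le> c^(N-1)" using i c1 by (intro power_increasing) auto
    then have "c^i \<le> exp 1" using ce by simp
    then have "x^i * c^i \<le> x^i * exp 1" using x0 by (intro mult_left_mono) auto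
    then show "r^i \<le> exp 1 * x^i" unfolding rx by (simp add: power_mult_distrib mult.commute)
  qed
  also have "\<dots> \<le> (\<Sum>i\<in>{1..N}. exp 1 * x^i)"
    by (rule sum_mono2) (use x0 in auto)
  also have "\<dots> = exp 1 * r_D M N K"
  proof -
    have mn: "min N K = N" using NK by simp
    have "(\<Sum>i\<in>{1..N}. x^i) * (1-x) = x - x^(N+1)" by (rule geo_id)
    moreover have "1 - x = M / real N" unfolding x_def by simp
    moreover have "M / real N > 0" using M1 N2 by simp
    ultimately have h1: "(\<Sum>i\<in>{1..N}. x^i) * (M / real N) = x - x^(N+1)" and h2: "M / real N \<noteq> 0"
      using M1 N2 by simp_all
    have "(\<Sum>i\<in>{1..N}. x^i) = (x - x^(N+1)) / (M / real N)"
      unfolding nonzero_eq_divide_eq[OF h2] by (rule h1)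
    also have "\<dots> = r_D M N K" unfolding r_D_def mn x_def using M1 N2 by (simp add: field_simps)
    finally show ?thesis by (simp add: sum_distrib_left[symmetric])
  qed
  finally show ?thesis using RFb by simp
qed

definition ff :: "real \<Rightarrow> real \<Rightarrow> real" where "ff k t = (k - t)/(t+1)"

lemma ff_diff:
  assumes "0 \<le> T"
  shows "ff k T - ff k (T+1) = (k+1)/((T+1)*(T+2))"
  using assms unfolding ff_def by (simp add: field_simps)

lemma caseA:
  fixes k n T v u :: real
  assumes T0: "0 \<le> T" and Tk: "T + 1 \<le> k" and vT: "T \<le> v" and v1: "v \<le> T+1"
    and ud: "u = v + (k-v)/n" and uT: "u \<le> T+1" and nk: "k+1 \<le> n" and k2: "2 \<le> k"
    and alt: "1 \<le> T \<or> k+2 \<le> n"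
  shows "ff k T + (ff k (T+1) - ff k T)*(v-T) \<le> 2*(ff k T + (ff k (T+1) - ff k T)*(u-T))"
proof -
  define d where "d = (k+1)/((T+1)*(T+2))"
  have dd: "ff k (T+1) = ff k T - d" using ff_diff[OF T0, of k] unfolding d_def by simp
  have d0: "0 \<le> d" unfolding d_def using T0 k2 by simp
  have n1: "n - 1 > 0" "n > 0" using nk k2 by auto
  define X where "X = v * (n - 1) + k"
  have uX: "u = X / n" unfolding ud X_def using n1 by (simp add: field_simps)
  have Xle: "X \<le> n*(T+1)" using uT n1 unfolding uX by (simp add: field_simps)
  have e1: "2*u - v - T = (X*(n-2) + n*k - T*n*(n-1))/(n*(n-1))"
    unfolding uX using n1 by (simp add: field_simps X_def)
  have "X*(n-2) \<le> n*(T+1)*(n-2)" using Xle nk k2 by (intro mult_right_mono) auto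
  then have "(X*(n-2) + n*k - T*n*(n-1))/(n*(n-1)) \<le> (n*(T+1)*(n-2) + n*k - T*n*(n-1))/(n*(n-1))"
    using n1 by (intro divide_right_mono) auto
  also have "\<dots> = (n+k-T-2)/(n-1)" using n1 by (simp add: field_simps)
  finally have B: "2*u - v - T \<le> (n+k-T-2)/(n-1)" unfolding e1 .
  have id: "(k-T)*(T+2)*(n-1) - (k+1)*(n+k-T-2) = (k-1-T)*((n-1)*(T+1)-(k+1))"
    by (simp add: algebra_simps)
  have p1: "0 \<le> k-1-T" using Tk by simp
  have p2: "0 \<le> (n-1)*(T+1)-(k+1)"
  proof (cases "1 \<le> T")
    case True
    then have "(n-1)*2 \<le> (n-1)*(T+1)" using n1 by (intro mult_left_mono) auto
    then show ?thesis using nk k2 by simp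
  next
    case False
    then have "k+2 \<le> n" using alt by simp
    moreover have "(n-1)*1 \<le> (n-1)*(T+1)" using n1 T0 by (intro mult_left_mono) auto
    ultimately show ?thesis by simp
  qed
  have "(k+1)*(n+k-T-2) \<le> (k-T)*(T+2)*(n-1)" using id mult_nonneg_nonneg[OF p1 p2] by simp
  then have "(k+1)*(n+k-T-2) / ((T+1)*(T+2)*(n-1)) \<le> (k-T)*(T+2)*(n-1) / ((T+1)*(T+2)*(n-1))"
    using n1 T0 by (intro divide_right_mono) auto
  moreover have "(k+1)*(n+k-T-2) / ((T+1)*(T+2)*(n-1)) = d*((n+k-T-2)/(n-1))"
    unfolding d_def by simp
  moreover have "(k-T)*(T+2)*(n-1) / ((T+1)*(T+2)*(n-1)) = ff k T"
  proof -
    have nz: "(T+2)*(n-1) \<noteq> 0" using n1 T0 by simp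
    have "(k-T)*(T+2)*(n-1) / ((T+1)*(T+2)*(n-1)) = ((k-T)*((T+2)*(n-1))) / ((T+1)*((T+2)*(n-1)))"
      by (simp only: mult.assoc)
    also have "\<dots> = (k-T)/(T+1)" by (rule nonzero_mult_divide_mult_cancel_right[OF nz])
    finally show ?thesis unfolding ff_def .
  qed
  ultimately have C: "d*((n+k-T-2)/(n-1)) \<le> ff k T" by simp
  have "d*(2*u - v - T) \<le> d*((n+k-T-2)/(n-1))" using B d0 by (rule mult_left_mono)
  with C have E: "d*(2*u - v - T) \<le> ff k T" by simp
  show ?thesis unfolding dd using E by (simp add: algebra_simps)
qed

lemma lin_interval:
  fixes a b w W F :: real
  assumes "a \<le> F" "a + b*W \<le> F" "0 \<le> w" "w \<le> W"
  shows "a + b*w \<le> F"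
proof (cases "0 \<le> b")
  case True
  then have "b*w \<le> b*W" using assms by (intro mult_left_mono) auto
  then show ?thesis using assms by simp
next
  case False
  then have "b*w \<le> 0" using assms by (simp add: mult_nonpos_nonneg)
  then show ?thesis using assms by simp
qed

lemma caseB:
  fixes k n T v u :: real
  assumes T0: "0 \<le> T" and Tk: "T + 2 \<le> k" and vT: "T \<le> v" and v1: "v \<le> T+1"
    and ud: "u = v + (k-v)/n" and uT: "T+1 \<le> u" and nk: "k+1 \<le> n" and k2: "2 \<le> k"
    and alt: "1 \<le> T \<or> k+2 \<le> n"
  shows "ff k T + (ff k (T+1) - ff k T)*(v-T) \<le> 2*(ff k (T+1) + (ff k (T+2) - ff k (T+1))*(u-(T+1)))"
proof -
  define d0 where "d0 = (k+1)/((T+1)*(T+2))"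
  define d1 where "d1 = (k+1)/((T+2)*(T+3))"
  have e0: "ff k T = ff k (T+1) + d0" using ff_diff[OF T0, of k] unfolding d0_def by simp
  have e1: "ff k (T+2) = ff k (T+1) - d1" using ff_diff[of "T+1" k] T0 unfolding d1_def
    by (simp add: add.assoc)
  have n1: "n - 1 > 0" "n > 0" using nk k2 by auto
  define c where "c = k - T - 1"
  define w where "w = u - (T+1)"
  have c0: "0 < c" using Tk unfolding c_def by simp
  have w0: "0 \<le> w" using uT unfolding w_def by simp
  have nu: "n*u = v * (n-1) + k" unfolding ud using n1 by (simp add: field_simps)
  have v_eq: "T+1-v = (c - n*w)/(n-1)"
  proof -
    have "(T+1-v)*(n-1) = c - n*w" unfolding c_def w_def using nu by (simp add: algebra_simps)
    then show ?thesis using n1 by (simp add: field_simps)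
  qed
  have wW: "w \<le> c/n"
  proof -
    have "v * (n-1) \<le> (T+1)*(n-1)" using v1 n1 by (intro mult_right_mono) auto
    then have "n*w \<le> c" unfolding w_def c_def using nu by (simp add: algebra_simps)
    then show ?thesis using n1 by (simp add: field_simps)
  qed
  have fT1: "ff k (T+1) = c/(T+2)" unfolding ff_def c_def by (simp add: add.assoc)
  have g0: "d0*c/(n-1) \<le> c/(T+2)"
  proof -
    have q: "(k+1)/((T+1)*(n-1)) \<le> 1"
    proof (cases "1 \<le> T")
      case True
      have "(n-1)*2 \<le> (n-1)*(T+1)" using True n1 by (intro mult_left_mono) auto
      then have "k+1 \<le> (T+1)*(n-1)" using nk k2 by (simp add: mult.commute)
      then show ?thesis using n1 T0 by simp
    next
      case False
      then have "k+2 \<le> n" using alt by simp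
      moreover have "(n-1)*1 \<le> (n-1)*(T+1)" using n1 T0 by (intro mult_left_mono) auto
      ultimately have "k+1 \<le> (T+1)*(n-1)" by (simp add: mult.commute)
      then show ?thesis using n1 T0 by simp
    qed
    have "d0*c/(n-1) = (c/(T+2)) * ((k+1)/((T+1)*(n-1)))" unfolding d0_def by (simp add: field_simps)
    also have "\<dots> \<le> (c/(T+2)) * 1" using q c0 T0 by (intro mult_left_mono) auto
    finally show ?thesis by simp
  qed
  have g1: "2*d1*c/n \<le> c/(T+2)"
  proof -
    have "3*n \<le> (T+3)*n" using n1 T0 by (intro mult_right_mono) auto
    then have "2*(k+1) \<le> (T+3)*n" using nk k2 by (smt (verit))
    moreover have "(T+3)*n > 0" using n1 T0 by simp
    ultimately have q: "2*(k+1)/((T+3)*n) \<le> 1" by (simp add: pos_divide_le_eq)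
    have "2*d1*c/n = (c/(T+2)) * (2*(k+1)/((T+3)*n))" unfolding d1_def by (simp add: field_simps)
    also have "\<dots> \<le> (c/(T+2)) * 1" using q c0 T0 by (intro mult_left_mono) auto
    finally show ?thesis by simp
  qed
  have key: "d0*c/(n-1) + (2*d1 - d0*n/(n-1))*w \<le> c/(T+2)"
  proof (rule lin_interval[OF _ _ w0 wW])
    show "d0*c/(n-1) \<le> c/(T+2)" by (rule g0)
    have aa: "d0*n/(n-1)*(c/n) = d0*c/(n-1)" using n1 by simp
    have "d0*c/(n-1) + (2*d1 - d0*n/(n-1))*(c/n) = d0*c/(n-1) + 2*d1*c/n - d0*n/(n-1)*(c/n)"
      by (simp add: algebra_simps)
    then have "d0*c/(n-1) + (2*d1 - d0*n/(n-1))*(c/n) = 2*d1*c/n" unfolding aa by simp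
    then show "d0*c/(n-1) + (2*d1 - d0*n/(n-1))*(c/n) \<le> c/(T+2)" using g1 by simp
  qed
  have "d0*(T+1-v) + 2*d1*w = d0*c/(n-1) + (2*d1 - d0*n/(n-1))*w"
  proof -
    have "d0*((c - n*w)/(n-1)) = d0*c/(n-1) - (d0*n/(n-1))*w"
      by (simp add: diff_divide_distrib right_diff_distrib)
    then show ?thesis unfolding v_eq by (simp add: algebra_simps)
  qed
  with key have K2: "d0*(T+1-v) + 2*d1*w \<le> ff k (T+1)" unfolding fT1 by simp
  show ?thesis unfolding e0 e1 using K2 unfolding w_def by (simp add: algebra_simps)
qed

lemma coef_ff:
  assumes "K \<le> L" "t \<le> K"
  shows "coef_R L K t = ff (real K) (real t)"
proof -
  have m: "K - min L K = 0" using assms by simp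
  have "Suc t * (K choose Suc t) = (K - t) * (K choose t)"
    using binomial_absorption[of t K] binomial_absorb_comp[of K t] by simp
  then have "real (K choose (t+1)) * (real t + 1) = (real K - real t) * real (K choose t)"
    using assms(2) by (metis Suc_eq_plus1 add.commute mult.commute of_nat_Suc of_nat_diff of_nat_mult)
  moreover have "real (K choose t) > 0" using assms(2) by simp
  ultimately have "real (K choose (t+1)) / real (K choose t) = (real K - real t) / (real t + 1)"
    by (simp add: field_simps)
  then show ?thesis unfolding coef_R_def ff_def m by simp
qed

lemma ff_convex:
  fixes k :: real and s t :: nat
  assumes "0 \<le> k"
  shows "ff k (real s) + (ff k (real s + 1) - ff k (real s))*(real t - real s) \<le> ff k (real t)"
proof -
  define S where "S = real s"
  define T where "T = real t"
  have S0: "0 \<le> S" and T0: "0 \<le> T" unfolding S_def T_def by auto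
  have fx: "ff k x = (k+1)/(x+1) - 1" if "0 \<le> x" for x
    unfolding ff_def using that by (simp add: field_simps)
  define A where "A = S + 1"
  define B where "B = S + 1 + 1"
  define C where "C = T + 1"
  have A0: "A > 0" and B0: "B > 0" and C0: "C > 0" and BA: "B = A + 1"
    unfolding A_def B_def C_def using S0 T0 by auto
  have f1: "ff k S = (k+1)/A - 1" unfolding A_def using fx[OF S0] .
  have f2: "ff k (S+1) = (k+1)/B - 1" unfolding B_def using fx[of "S+1"] S0 by simp
  have f3: "ff k T = (k+1)/C - 1" unfolding C_def using fx[OF T0] .
  have TS: "T - S = C - A" unfolding A_def C_def by simp
  have "(k+1)/C - 1 - ((k+1)/A - 1 + ((k+1)/B - 1 - ((k+1)/A - 1))*(C - A))
      = (k+1)*(A*B - C*B + (B-A)*(C-A)*C)/(C*A*B)"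
    using A0 B0 C0 by (simp add: field_simps)
  also have "A*B - C*B + (B-A)*(C-A)*C = (C-A)*(C-A-1)" unfolding BA by (simp add: algebra_simps)
  finally have id: "ff k T - (ff k S + (ff k (S + 1) - ff k S)*(T - S)) = (k+1)*((T-S)*(T-S-1))/((T+1)*(S+1)*(S+2))"
    unfolding f1 f2 f3 TS by (simp add: A_def B_def C_def add.assoc mult.assoc)
  have "0 \<le> (T-S)*(T-S-1)"
  proof (cases "t \<le> s")
    case True
    then have "T - S \<le> 0" "T-S-1 \<le> 0" unfolding S_def T_def by auto
    then show ?thesis by (simp add: mult_nonpos_nonpos)
  next
    case False
    then have "T - S \<ge> 0" "T-S-1 \<ge> 0" unfolding S_def T_def by auto
    then show ?thesis by simp
  qed
  then have "0 \<le> (k+1)*((T-S)*(T-S-1))/((T+1)*(S+1)*(S+2))" using assms S0 T0 by simp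
  then show ?thesis using id unfolding S_def T_def by simp
qed

lemma RF_upper:
  assumes KN: "K \<le> N - 1" and K1: "1 \<le> K" and t1: "t + 1 \<le> K"
    and M1: "1 + real t * (real N - 1) / real K \<le> M" and M2: "M \<le> 1 + (real t + 1) * (real N - 1) / real K"
  shows "R_F N K M \<le> ff (real K) (real t) + (ff (real K) (real t + 1) - ff (real K) (real t)) * ((M-1)*real K/(real N - 1) - real t)"
proof -
  define P where "P = {(0::real, real N)} \<union> {(1 + real t * (real N - 1) / real K, coef_R (N - 1) K t) | t. t \<in> {0..K}}"
  have RF: "R_F N K M = lower_conv_env P M" unfolding R_F_def P_def ..
  have k0: "real K > 0" using K1 by simp
  have n1: "real N - 1 > 0" using KN K1 by simp
  define x1 where "x1 = 1 + real t * (real N - 1) / real K"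
  define x2 where "x2 = 1 + (real t + 1) * (real N - 1) / real K"
  have c1: "coef_R (N-1) K t = ff (real K) (real t)" using coef_ff KN t1 by simp
  have c2: "coef_R (N-1) K (t+1) = ff (real K) (real t + 1)" using coef_ff[of K "N-1" "t+1"] KN t1 by (simp add: add.commute)
  have p1: "(x1, ff (real K) (real t)) \<in> P" unfolding P_def x1_def using t1 c1 by force
  have p2: "(x2, ff (real K) (real t + 1)) \<in> P" unfolding P_def x2_def using t1 c2
    by (auto intro!: exI[of _ "t+1"])
  have dx: "x2 - x1 = (real N - 1)/real K" unfolding x1_def x2_def using k0 by (simp add: field_simps)
  have "(real N - 1)/real K > 0" using n1 k0 by simp
  then have x12: "x1 < x2" using dx by simp
  have "(M, ff (real K) (real t) + (ff (real K) (real t + 1) - ff (real K) (real t))*(M-x1)/(x2-x1)) \<in> convex hull P"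
    by (rule seg_in_hull[OF p1 p2]) (use M1 M2 x12 in \<open>auto simp: x1_def x2_def\<close>)
  moreover have "\<forall>p\<in>P. 0 \<le> snd p" unfolding P_def using coef_nonneg by auto
  ultimately have "R_F N K M \<le> ff (real K) (real t) + (ff (real K) (real t + 1) - ff (real K) (real t))*(M-x1)/(x2-x1)"
    unfolding RF by (rule env_le)
  moreover have "(M-x1)/(x2-x1) = (M-1)*real K/(real N - 1) - real t"
    unfolding dx unfolding x1_def using n1 k0 by (simp add: field_simps)
  ultimately show ?thesis by (metis times_divide_eq_right)
qed

lemma RF_special:
  assumes NK: "N = K + 1" and K1: "1 \<le> K" and M0: "0 \<le> M" and M2: "M \<le> 2"
  shows "R_F N K M \<le> real N + ((real K - 1)/2 - real N) * M / 2"
proof -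
  define P where "P = {(0::real, real N)} \<union> {(1 + real t * (real N - 1) / real K, coef_R (N - 1) K t) | t. t \<in> {0..K}}"
  have RF: "R_F N K M = lower_conv_env P M" unfolding R_F_def P_def ..
  have k0: "real K > 0" using K1 by simp
  have c1: "coef_R (N-1) K 1 = (real K - 1)/2" using coef_ff[of K "N-1" 1] NK K1 by (simp add: ff_def)
  have x2: "1 + real 1 * (real N - 1) / real K = 2" using NK k0 by simp
  have p1: "(0, real N) \<in> P" unfolding P_def by simp
  have p2: "(2, (real K - 1)/2) \<in> P" unfolding P_def using K1 c1 x2
    by (auto intro!: exI[of _ "1"])
  have "(M, real N + ((real K - 1)/2 - real N)*(M-0)/(2-0)) \<in> convex hull P"
    by (rule seg_in_hull[OF p1 p2]) (use M0 M2 in auto)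
  moreover have "\<forall>p\<in>P. 0 \<le> snd p" unfolding P_def using coef_nonneg by auto
  ultimately show ?thesis unfolding RF by (auto dest: env_le)
qed

lemma rC_lower:
  assumes KN: "K \<le> N" and K1: "1 \<le> K" and s1: "s + 1 \<le> K" and M0: "0 \<le> M" and MN: "M \<le> real N"
  shows "ff (real K) (real s) + (ff (real K) (real s + 1) - ff (real K) (real s)) * (M * real K / real N - real s) \<le> r_C M N K"
proof -
  define P where "P = {(real t * real N / real K, coef_R N K t) | t. t \<in> {0..K}}"
  have RC: "r_C M N K = lower_conv_env P M" unfolding r_C_def P_def ..
  have k0: "real K > 0" using K1 by simp
  have n0: "real N > 0" using KN K1 by simp
  define k where "k = real K"
  define a where "a = ff k (real s)"
  define b where "b = ff k (real s + 1) - ff k (real s)"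
  have line: "\<forall>p\<in>P. (a - b*real s) + (b*k/real N) * fst p \<le> snd p"
  proof
    fix p assume "p \<in> P"
    then obtain t where t: "t \<le> K" "p = (real t * real N / real K, coef_R N K t)" unfolding P_def by auto
    have "coef_R N K t = ff k (real t)" using coef_ff[of K N t] t KN unfolding k_def by simp
    moreover have "(b*k/real N) * (real t * real N / real K) = b * real t" using n0 k0 unfolding k_def by simp
    moreover have "a + b*(real t - real s) \<le> ff k (real t)" unfolding a_def b_def
      by (rule ff_convex) (simp add: k_def)
    ultimately show "(a - b*real s) + (b*k/real N) * fst p \<le> snd p" using t by (simp add: algebra_simps)
  qed
  have q1: "(0, coef_R N K 0) \<in> P" unfolding P_def by force
  have q2: "(real N, coef_R N K K) \<in> P" unfolding P_def using k0 by force
  obtain y0 where "(M, y0) \<in> convex hull P"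
    using seg_in_hull[OF q1 q2] M0 MN n0 by fastforce
  from env_ge[OF line this] have "(a - b*real s) + (b*k/real N) * M \<le> r_C M N K" unfolding RC .
  moreover have "(a - b*real s) + (b*k/real N) * M = a + b*(M*k/real N - real s)" by (simp add: algebra_simps)
  ultimately show ?thesis unfolding a_def b_def k_def by simp
qed

lemma special_a:
  fixes k n M :: real
  assumes k3: "3 \<le> k" and nk: "n = k + 1" and M1: "1 \<le> M" and M2: "M \<le> 2" and u1: "M*k/n \<le> 1"
  shows "n + ((k-1)/2 - n)*M/2 \<le> 2*(ff k 0 + (ff k 1 - ff k 0)*(M*k/n - 0))"
proof -
  have n0: "n > 0" using nk k3 by simp
  have f0: "ff k 0 = k" and f1: "ff k 1 = (k-1)/2" unfolding ff_def by simp_all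
  have Pk: "M*k \<le> k+1" using u1 n0 nk by (simp add: divide_le_eq)
  have "k*(3*M-4) = 3*(M*k) - 4*k" by (simp add: algebra_simps)
  then have "k*(3*M-4) \<le> 0" using Pk k3 by linarith
  then have m43: "3*M - 4 \<le> 0" using k3 by (simp add: mult_le_0_iff)
  have "(k-1)*(3*M-4) \<le> 0" using m43 k3 by (simp add: mult_nonneg_nonpos)
  then have Q: "3*(M*k) - 4*k - 3*M + 4 \<le> 0" by (simp add: algebra_simps)
  have R: "2*(ff k 0 + (ff k 1 - ff k 0)*(M*k/n - 0)) = 2*k - M*k"
    unfolding f0 f1 nk using k3 by (simp add: field_simps)
  show ?thesis unfolding R using Q nk by (simp add: field_simps)
qed

lemma special_b:
  fixes k n M :: real
  assumes k3: "3 \<le> k" and nk: "n = k + 1" and M1: "1 \<le> M" and M2: "M \<le> 2" and u1: "1 \<le> M*k/n"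
  shows "n + ((k-1)/2 - n)*M/2 \<le> 2*(ff k 1 + (ff k 2 - ff k 1)*(M*k/n - 1))"
proof -
  have n0: "n > 0" using nk k3 by simp
  have f1: "ff k 1 = (k-1)/2" and f2: "ff k 2 = (k-2)/3" unfolding ff_def by simp_all
  have Pk: "k+1 \<le> M*k" using u1 n0 nk by (simp add: le_divide_eq)
  have bc: "0 \<le> (2-M)*(k-3)" using M2 k3 by simp
  have kk: "0 \<le> (k-1)*(k-3)" using k3 by simp
  have "k*(6*M + 2*k - 14) = 6*(M*k) + 2*k*k - 14*k" by (simp add: algebra_simps)
  also have "\<dots> \<ge> 6*(k+1) + 2*k*k - 14*k" using Pk by simp
  finally have "k*(6*M + 2*k - 14) \<ge> 2*((k-1)*(k-3))" by (simp add: algebra_simps)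
  then have "k*(6*M + 2*k - 14) \<ge> 0" using kk by simp
  then have L: "6*M + 2*k - 14 \<ge> 0" using k3 by (simp add: zero_le_mult_iff)
  have goal: "20 - 4*k \<le> 9*M - M*k" using bc L by (simp add: algebra_simps)
  have R: "2*(ff k 1 + (ff k 2 - ff k 1)*(M*k/n - 1)) = k - 1 - (M*k - k - 1)/3"
    unfolding f1 f2 nk using k3 by (simp add: field_simps)
  show ?thesis unfolding R using goal nk by (simp add: field_simps)
qed

lemma part1:
  assumes K2: "K \<ge> 2" and NK: "K < N" and ne: "(N,K) \<noteq> (3,2)" and M1: "1 \<le> M" and MN: "M \<le> real N"
  shows "R_F N K M \<le> 2 * r_C M N K"
proof -
  have k0: "real K > 0" and k2: "2 \<le> real K" using K2 by auto
  have n1: "real N - 1 > 0" using NK K2 by simp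
  have n0: "real N > 0" using NK K2 by simp
  have nk1: "real K + 1 \<le> real N" using NK by simp
  define v where "v = (M-1)*real K/(real N - 1)"
  define u where "u = M*real K/real N"
  have v0: "0 \<le> v" unfolding v_def using M1 k0 n1 by simp
  have vk: "v \<le> real K"
  proof -
    have "(M-1)*real K \<le> (real N - 1)*real K" using MN k0 by (intro mult_right_mono) auto
    then show ?thesis unfolding v_def using n1 by (simp add: divide_le_eq mult.commute)
  qed
  have vn: "v * (real N - 1) = (M-1)*real K" unfolding v_def using n1 by simp
  have Mv: "M = 1 + v * (real N - 1)/real K" using vn k0 by (simp add: field_simps)
  have uv: "u = v + (real K - v)/real N"
  proof -
    have "v + (real K - v)/real N = (v * (real N - 1) + real K)/real N" using n0 by (simp add: field_simps)
    also have "\<dots> = u" unfolding vn u_def by (simp add: algebra_simps)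
    finally show ?thesis by simp
  qed
  have uk: "u \<le> real K"
  proof -
    have "(real K - v)/real N \<le> (real K - v)/1" using vk n0 nk1 k0
      by (intro divide_left_mono) auto
    then show ?thesis unfolding uv by simp
  qed
  obtain t :: nat where t1: "t+1 \<le> K" and tv: "real t \<le> v" and vt: "v \<le> real t + 1"
  proof (cases "real K - 1 \<le> v")
    case True
    show ?thesis by (rule that[of "K-1"]) (use True vk K2 in \<open>auto simp: of_nat_diff\<close>)
  next
    case False
    have f1: "real (nat \<lfloor>v\<rfloor>) = of_int \<lfloor>v\<rfloor>" using v0 by simp
    have "of_int \<lfloor>v\<rfloor> < real K - 1" using False of_int_floor_le[of v] by linarith
    then have "nat \<lfloor>v\<rfloor> + 1 \<le> K" using f1 by linarith
    moreover have "real (nat \<lfloor>v\<rfloor>) \<le> v" using f1 by simp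
    moreover have "v \<le> real (nat \<lfloor>v\<rfloor>) + 1" using f1 by linarith
    ultimately show ?thesis by (rule that)
  qed
  have Mlo: "1 + real t * (real N - 1) / real K \<le> M"
    unfolding Mv using tv n1 k0 by (intro add_left_mono divide_right_mono mult_right_mono) auto
  have Mhi: "M \<le> 1 + (real t + 1) * (real N - 1) / real K"
    unfolding Mv using vt n1 k0 by (intro add_left_mono divide_right_mono mult_right_mono) auto
  have KN1: "K \<le> N - 1" using NK by simp
  show ?thesis
  proof (cases "N = K + 1 \<and> t = 0")
    case True
    then have NK1: "N = K + 1" and t0: "t = 0" by auto
    have K3: "3 \<le> real K" using ne NK1 K2 by auto
    have M2: "M \<le> 2" using Mhi t0 NK1 k0 by simp
    have RFs: "R_F N K M \<le> real N + ((real K - 1)/2 - real N) * M / 2"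
      by (rule RF_special[OF NK1]) (use K2 M1 M2 in auto)
    have nn: "real N = real K + 1" using NK1 by simp
    show ?thesis
    proof (cases "M * real K / real N \<le> 1")
      case True
      have "real N + ((real K - 1)/2 - real N) * M / 2 \<le>
          2*(ff (real K) 0 + (ff (real K) 1 - ff (real K) 0)*(M*real K/real N - 0))"
        by (rule special_a[OF K3 nn M1 M2 True])
      also have "\<dots> \<le> 2 * r_C M N K"
        using rC_lower[of K N 0 M] NK K2 M1 MN by simp
      finally show ?thesis using RFs by simp
    next
      case False
      have "real N + ((real K - 1)/2 - real N) * M / 2 \<le>
          2*(ff (real K) 1 + (ff (real K) 2 - ff (real K) 1)*(M*real K/real N - 1))"
        by (rule special_b[OF K3 nn M1 M2]) (use False in simp)
      also have "\<dots> \<le> 2 * r_C M N K"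
        using rC_lower[of K N 1 M] NK K2 M1 MN by (simp add: one_add_one)
      finally show ?thesis using RFs by simp
    qed
  next
    case False
    have alt: "1 \<le> real t \<or> real K + 2 \<le> real N"
    proof (cases "t = 0")
      case True
      then have "N \<noteq> K + 1" using False by simp
      then have "K + 2 \<le> N" using NK by simp
      then show ?thesis by simp
    next
      case False then show ?thesis by simp
    qed
    have RFu: "R_F N K M \<le> ff (real K) (real t) + (ff (real K) (real t + 1) - ff (real K) (real t)) * (v - real t)"
      using RF_upper[OF KN1 _ t1 Mlo Mhi] K2 unfolding v_def by simp
    show ?thesis
    proof (cases "u \<le> real t + 1")
      case True
      have "ff (real K) (real t) + (ff (real K) (real t + 1) - ff (real K) (real t)) * (v - real t)
          \<le> 2*(ff (real K) (real t) + (ff (real K) (real t + 1) - ff (real K) (real t))*(u - real t))"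
        by (rule caseA[OF _ _ tv vt uv True nk1 k2 alt]) (use t1 in auto)
      also have "\<dots> \<le> 2 * r_C M N K"
        using rC_lower[of K N t M] NK K2 M1 MN t1 unfolding u_def by simp
      finally show ?thesis using RFu by simp
    next
      case False
      have t2: "t + 2 \<le> K"
      proof (rule ccontr)
        assume "\<not> t + 2 \<le> K"
        then have "K = t + 1" using t1 by simp
        then show False using False uk by simp
      qed
      have "ff (real K) (real t) + (ff (real K) (real t + 1) - ff (real K) (real t)) * (v - real t)
          \<le> 2*(ff (real K) (real t + 1) + (ff (real K) (real t + 2) - ff (real K) (real t + 1))*(u - (real t + 1)))"
        by (rule caseB[OF _ _ tv vt uv _ nk1 k2 alt]) (use t2 False in auto)
      also have "\<dots> \<le> 2 * r_C M N K"
        using rC_lower[of K N "t+1" M] NK K2 M1 MN t2 unfolding u_def by (simp add: ac_simps)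
      finally show ?thesis using RFu by simp
    qed
  qed
qed

theorem lemma5:
  fixes N K :: nat
  assumes "N \<ge> 2" and "K \<ge> 2"
  shows "(N > K \<and> (N, K) \<noteq> (3, 2) \<longrightarrow>
            (\<forall>M::real. 1 \<le> M \<and> M \<le> real N \<longrightarrow> R_F N K M \<le> 2 * r_C M N K))
       \<and> (N \<le> K \<longrightarrow>
            (\<forall>M::real. 1 \<le> M \<and> M \<le> real N \<longrightarrow> R_F N K M \<le> exp 1 * r_D M N K))"
  using part1[OF assms(2)] part2[OF assms(1)] by blast

end
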